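(* Let $W,V$ be subspaces of $\mathbb{C}^n$ with $\mathbb{C}^n=W\oplus V^\perp$, let $\{\mathbf{w}_i\}_{i=1}^N$ be a frame for $W$ with frame operator $\mathbf{S}=\sum_{i=1}^N\mathbf{w}_i\mathbf{w}_i^*$, and let $\{\mathbf{v}_i\}_{i=1}^N$ be an oblique dual frame of $\{\mathbf{w}_i\}_{i=1}^N$ on $V$. Let $p=2k$ where $k\ge1$, and let $d_W=\dim W$. Then $$\sum_{i=1}^N|\langle\mathbf{w}_i,\mathbf{v}_i\rangle|^p\ge N^{1-p}d_W^p\quad\text{and}\quad\sum_{i=1}^N\sum_{j=1}^N|\langle\mathbf{w}_i,\mathbf{v}_j\rangle|^p\ge N^{2-p}d_W^{p/2}.$$ Furthermore, when $k>1$, the first inequality is an equality if and only if $\langle\mathbf{w}_i,\mathbf{v}_i\rangle=\frac{d_W}{N}$ for all $i$, and the second inequality is an equality if and only if $|\langle\mathbf{w}_i,\mathbf{v}_j\rangle|$ is constant over all $i$ and $j$ and $\mathbf{v}_j=\boldsymbol{\pi}_{VW^\perp}\mathbf{S}^\dagger\mathbf{w}_j$ for each $j$.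
   Context: The inner product on $\mathbb{C}^n$ is $\langle\mathbf{x},\mathbf{y}\rangle=\mathbf{y}^*\mathbf{x}$. $\mathbf{S}^\dagger$ is the Moore–Penrose inverse. When $\mathbb{C}^n=W\oplus V^\perp$ (equivalently $\mathbb{C}^n=V\oplus W^\perp$), $\boldsymbol{\pi}_{WV^\perp}$ is the oblique projection onto $W$ along $V^\perp$ and $\boldsymbol{\pi}_{VW^\perp}$ the oblique projection onto $V$ along $W^\perp$. A finite family in $W$ is a frame for $W$ if it spans $W$. A frame $\{\mathbf{v}_i\}_{i=1}^N\subset V$ for $V$ is an oblique dual frame of $\{\mathbf{w}_i\}$ on $V$ if $\boldsymbol{\pi}_{WV^\perp}\mathbf{f}=\sum_{i=1}^N\langle\mathbf{f},\mathbf{v}_i\rangle\mathbf{w}_i$ for all $\mathbf{f}\in\mathbb{C}^n$. *)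

theory Defs
  imports "HOL-Analysis.Analysis"
begin

text \<open>Vectors of C^n are modelled as complex ^ 'n; complex-linear notions use the
  library interpretation vec (scalar multiplication *s): vec.subspace, vec.span, vec.dim.\<close>

definition cinner :: "complex^'n \<Rightarrow> complex^'n \<Rightarrow> complex" where
  "cinner x y = (\<Sum>i\<in>UNIV. x$i * cnj (y$i))"   \<comment> \<open>\<langle>x,y\<rangle> = y^* x\<close>

definition corth :: "(complex^'n) set \<Rightarrow> (complex^'n) set" where
  "corth V = {x. \<forall>v\<in>V. cinner x v = 0}"

definition direct_sum_UNIV :: "(complex^'n) set \<Rightarrow> (complex^'n) set \<Rightarrow> bool" where
  "direct_sum_UNIV A B \<longleftrightarrow> A \<inter> B = {0} \<and> (\<forall>f. \<exists>a\<in>A. \<exists>b\<in>B. f = a + b)"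

text \<open>Oblique projection onto A along B (when the whole space is A \<oplus> B).\<close>
definition oblique_proj :: "(complex^'n) set \<Rightarrow> (complex^'n) set \<Rightarrow> complex^'n \<Rightarrow> complex^'n" where
  "oblique_proj A B f = (THE a. a \<in> A \<and> f - a \<in> B)"

definition outer :: "complex^'n \<Rightarrow> complex^'n \<Rightarrow> complex^'n^'n" where
  "outer x y = (\<chi> r c. x$r * cnj (y$c))"

definition cadj :: "complex^'n^'m \<Rightarrow> complex^'m^'n" where
  "cadj A = (\<chi> i j. cnj (A$j$i))"

definition mp_inverse :: "complex^'n^'m \<Rightarrow> complex^'m^'n" where
  "mp_inverse A = (THE X. A ** X ** A = A \<and> X ** A ** X = X \<and>
      cadj (A ** X) = A ** X \<and> cadj (X ** A) = X ** A)"

definition frame_op :: "nat \<Rightarrow> (nat \<Rightarrow> complex^'n) \<Rightarrow> complex^'n^'n" where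
  "frame_op N w = (\<Sum>i<N. outer (w i) (w i))"

definition is_frame :: "nat \<Rightarrow> (nat \<Rightarrow> complex^'n) \<Rightarrow> (complex^'n) set \<Rightarrow> bool" where
  "is_frame N w W \<longleftrightarrow> (\<forall>i<N. w i \<in> W) \<and> vec.span (w ` {..<N}) = W"

definition oblique_dual_frame ::
  "nat \<Rightarrow> (nat \<Rightarrow> complex^'n) \<Rightarrow> (complex^'n) set \<Rightarrow> (nat \<Rightarrow> complex^'n) \<Rightarrow> (complex^'n) set \<Rightarrow> bool" where
  "oblique_dual_frame N w W v V \<longleftrightarrow> is_frame N v V \<and>
     (\<forall>f. oblique_proj W (corth V) f = (\<Sum>i<N. cinner f (v i) *s w i))"

end

theory Submission
  imports Defs
begin


lemma cinner_add_left: "cinner (x + y) z = cinner x z + cinner y z"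
  by (simp add: cinner_def sum.distrib algebra_simps)
lemma cinner_add_right: "cinner x (y + z) = cinner x y + cinner x z"
  by (simp add: cinner_def sum.distrib algebra_simps)
lemma cinner_diff_left: "cinner (x - y) z = cinner x z - cinner y z"
  by (simp add: cinner_def sum_subtractf algebra_simps)
lemma cinner_diff_right: "cinner x (y - z) = cinner x y - cinner x z"
  by (simp add: cinner_def sum_subtractf algebra_simps)
lemma cinner_scale_left: "cinner (c *s x) y = c * cinner x y"
  by (simp add: cinner_def sum_distrib_left algebra_simps)
lemma cinner_scale_right: "cinner x (c *s y) = cnj c * cinner x y"
  by (simp add: cinner_def sum_distrib_left algebra_simps)
lemma cinner_zero_left[simp]: "cinner 0 y = 0" by (simp add: cinner_def)
lemma cinner_zero_right[simp]: "cinner x 0 = 0" by (simp add: cinner_def)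
lemma cinner_sum_left: "cinner (\<Sum>i\<in>I. f i) y = (\<Sum>i\<in>I. cinner (f i) y)"
  by (induction I rule: infinite_finite_induct) (auto simp: cinner_add_left)
lemma cinner_sum_right: "cinner x (\<Sum>i\<in>I. f i) = (\<Sum>i\<in>I. cinner x (f i))"
  by (induction I rule: infinite_finite_induct) (auto simp: cinner_add_right)
lemma cinner_commute: "cinner x y = cnj (cinner y x)"
  by (simp add: cinner_def mult.commute)
lemma cinner_self: "cinner x x = of_real ((\<Sum>i\<in>UNIV. (cmod (x$i))\<^sup>2))"
  unfolding cinner_def of_real_sum complex_norm_square ..
lemma cinner_self_eq_0: "cinner x x = 0 \<longleftrightarrow> x = 0"
proof
  assume "cinner x x = 0"
  then have "(\<Sum>i\<in>UNIV. (cmod (x$i))\<^sup>2) = 0" unfolding cinner_self of_real_eq_0_iff .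
  then have "\<forall>i\<in>UNIV. (cmod (x$i))\<^sup>2 = 0" by (subst sum_nonneg_eq_0_iff[symmetric]) auto
  then show "x = 0" by (simp add: vec_eq_iff)
qed simp
lemma cinner_adj: "cinner (A *v x) y = cinner x (cadj A *v y)"
  by (simp add: cinner_def cadj_def matrix_vector_mult_def sum_distrib_left sum_distrib_right
       algebra_simps cnj_sum; subst sum.swap; simp add: algebra_simps)

lemma cadj_mult: "cadj (A ** B) = cadj B ** cadj A"
  by (simp add: cadj_def matrix_matrix_mult_def vec_eq_iff cnj_sum mult.commute)
lemma cadj_cadj[simp]: "cadj (cadj A) = A"
  by (simp add: cadj_def vec_eq_iff)
lemma cadj_sum: "cadj (\<Sum>i\<in>I. f i) = (\<Sum>i\<in>I. cadj (f i))"
  by (induction I rule: infinite_finite_induct) (auto simp: cadj_def vec_eq_iff)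
lemma cadj_outer: "cadj (outer x x) = outer x x"
  by (simp add: cadj_def outer_def vec_eq_iff mult.commute)
lemma outer_mv: "outer x y *v z = cinner z y *s x"
  by (simp add: outer_def cinner_def matrix_vector_mult_def vec_eq_iff sum_distrib_left algebra_simps)
lemma sum_mv: "(\<Sum>i\<in>I. f i) *v z = (\<Sum>i\<in>I. f i *v z)"
  by (induction I rule: infinite_finite_induct) (auto simp: matrix_vector_mult_add_rdistrib)


lemma corth_diff: "x \<in> corth B \<Longrightarrow> y \<in> corth B \<Longrightarrow> x - y \<in> corth B"
  by (simp add: corth_def cinner_diff_left)

lemma oblique_proj_eq:
  assumes A: "vec.subspace A" and AB: "A \<inter> corth B' = {0}"
    and a: "a \<in> A" "f - a \<in> corth B'"
  shows "oblique_proj A (corth B') f = a"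
  unfolding oblique_proj_def
proof (rule the_equality)
  show "a \<in> A \<and> f - a \<in> corth B'" using a by simp
next
  fix a' assume a': "a' \<in> A \<and> f - a' \<in> corth B'"
  have "a - a' \<in> A" using A a a' vec.subspace_diff by blast
  moreover have "(f - a') - (f - a) \<in> corth B'" using corth_diff a a' by blast
  moreover have "(f - a') - (f - a) = a - a'" by simp
  ultimately have "a - a' \<in> A \<inter> corth B'" by simp
  then show "a' = a" using AB by auto
qed

locale odf =
  fixes W V :: "(complex^'n) set" and w v :: "nat \<Rightarrow> complex^'n" and N :: nat
  assumes subW: "vec.subspace W" and subV: "vec.subspace V"
    and ds: "direct_sum_UNIV W (corth V)"
    and N1: "N \<ge> 1"
    and frame: "is_frame N w W"
    and dual: "oblique_dual_frame N w W v V"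
begin

lemma wW: "i < N \<Longrightarrow> w i \<in> W" using frame by (simp add: is_frame_def)
lemma vV: "i < N \<Longrightarrow> v i \<in> V" using dual by (simp add: is_frame_def oblique_dual_frame_def)
lemma proj: "oblique_proj W (corth V) f = (\<Sum>i<N. cinner f (v i) *s w i)"
  using dual by (simp add: oblique_dual_frame_def)

lemma recon: assumes "x \<in> W" shows "(\<Sum>i<N. cinner x (v i) *s w i) = x"
proof -
  have "oblique_proj W (corth V) x = x"
    by (rule oblique_proj_eq[OF subW]) (use ds assms in \<open>auto simp: direct_sum_UNIV_def corth_def\<close>)
  then show ?thesis using proj by simp
qed

lemma recon_w: "i < N \<Longrightarrow> (\<Sum>j<N. cinner (w i) (v j) *s w j) = w i"
  using recon wW by blast

lemma orthW: assumes "\<And>i. i < N \<Longrightarrow> cinner (w i) y = 0" "x \<in> W" shows "cinner x y = 0"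
proof -
  have "cinner x y = cinner (\<Sum>i<N. cinner x (v i) *s w i) y" using recon assms by simp
  also have "\<dots> = 0" using assms by (simp add: cinner_sum_left cinner_scale_left)
  finally show ?thesis .
qed

lemma V_corthW: assumes "x \<in> V" "\<And>y. y \<in> W \<Longrightarrow> cinner x y = 0" shows "x = 0"
proof -
  obtain a b where ab: "a \<in> W" "b \<in> corth V" "x = a + b" using ds unfolding direct_sum_UNIV_def by blast
  have "cinner x b = 0" using ab assms cinner_commute[of x b] by (simp add: corth_def)
  moreover have "cinner x a = 0" using assms ab by simp
  ultimately have "cinner x x = 0" using ab by (simp add: cinner_add_right)
  then show ?thesis by (simp add: cinner_self_eq_0)
qed

definition proj2 where "proj2 f = (\<Sum>i<N. cinner f (w i) *s v i)"

lemma proj2_V: "proj2 f \<in> V"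
  unfolding proj2_def by (rule vec.subspace_sum[OF subV]) (simp add: vec.subspace_scale[OF subV] vV)

lemma proj2_inner: assumes "y \<in> W" shows "cinner (proj2 f) y = cinner f y"
proof -
  have "cinner f y = cinner f (\<Sum>i<N. cinner y (v i) *s w i)" using recon assms by simp
  also have "\<dots> = (\<Sum>i<N. cnj (cinner y (v i)) * cinner f (w i))"
    by (simp add: cinner_sum_right cinner_scale_right)
  also have "\<dots> = cinner (proj2 f) y"
    unfolding proj2_def by (simp add: cinner_sum_left cinner_scale_left mult.commute cinner_commute[of y])
  finally show ?thesis by simp
qed

lemma proj2_eq: "oblique_proj V (corth W) f = proj2 f"
proof (rule oblique_proj_eq[OF subV])
  show "V \<inter> corth W = {0}"
  proof
    show "V \<inter> corth W \<subseteq> {0}"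
    proof
      fix x assume x: "x \<in> V \<inter> corth W"
      then show "x \<in> {0}" using V_corthW[of x] by (auto simp: corth_def)
    qed
  qed (use vec.subspace_0[OF subV] in \<open>auto simp: corth_def\<close>)
  show "proj2 f \<in> V" by (rule proj2_V)
  show "f - proj2 f \<in> corth W"
    by (simp add: corth_def cinner_diff_left proj2_inner)
qed

lemma inner_proj2: "y \<in> W \<Longrightarrow> cinner y (proj2 f) = cinner y f"
  using proj2_inner[of y f] cinner_commute[of y] by metis

lemma trace: "(\<Sum>i<N. cinner (w i) (v i)) = of_nat (vec.dim W)"
proof -
  obtain B where B: "B \<subseteq> W" "vec.independent B" "W \<subseteq> vec.span B" "card B = vec.dim W"
    using vec.basis_exists by blast
  have fB: "finite B" using B vec.finiteI_independent by blast
  have "\<forall>i. \<exists>c. i < N \<longrightarrow> w i = (\<Sum>b\<in>B. c b *s b)"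
    using wW B(3) vec.span_finite[OF fB] by blast
  then obtain c where c: "\<And>i. i < N \<Longrightarrow> w i = (\<Sum>b\<in>B. c i b *s b)" by metis
  have coef: "(\<Sum>i<N. cinner b (v i) * c i b') = (if b' = b then 1 else 0)"
    if b: "b \<in> B" and b': "b' \<in> B" for b b'
  proof -
    have "b = (\<Sum>i<N. cinner b (v i) *s w i)" using recon b B by auto
    also have "\<dots> = (\<Sum>i<N. cinner b (v i) *s (\<Sum>b'\<in>B. c i b' *s b'))" using c by simp
    also have "\<dots> = (\<Sum>b'\<in>B. (\<Sum>i<N. cinner b (v i) * c i b') *s b')"
      by (simp add: vec.scale_sum_right sum_distrib_left vec.scale_sum_left vec.scale_scale) (rule sum.swap)
    finally have e1: "b = (\<Sum>b'\<in>B. (\<Sum>i<N. cinner b (v i) * c i b') *s b')" .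
    have e2: "b = (\<Sum>b'\<in>B. (if b' = b then 1 else 0) *s b')"
      using b fB by (simp add: if_distrib[of "\<lambda>x. x *s _"] sum.delta cong: if_cong)
    define u where "u b' = (\<Sum>i<N. cinner b (v i) * c i b') - (if b' = b then 1 else 0)" for b'
    have "(\<Sum>b'\<in>B. u b' *s b') = 0"
      using e1 e2 unfolding u_def by (simp add: vec.scale_left_diff_distrib sum_subtractf)
    then have "u b' = 0" using B(2) vec.dependent_finite[OF fB] b' by blast
    then show ?thesis unfolding u_def by (auto split: if_splits)
  qed
  have "(\<Sum>i<N. cinner (w i) (v i)) = (\<Sum>i<N. \<Sum>b\<in>B. c i b * cinner b (v i))"
    using c by (simp add: cinner_sum_left cinner_scale_left)
  also have "\<dots> = (\<Sum>b\<in>B. \<Sum>i<N. cinner b (v i) * c i b)"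
    by (subst sum.swap) (simp add: mult.commute)
  also have "\<dots> = (\<Sum>b\<in>B. 1)" using coef by simp
  finally show ?thesis using B(4) by simp
qed

end


definition penrose :: "complex^'n^'m \<Rightarrow> complex^'m^'n \<Rightarrow> bool" where
  "penrose A X \<longleftrightarrow> A ** X ** A = A \<and> X ** A ** X = X \<and>
      cadj (A ** X) = A ** X \<and> cadj (X ** A) = X ** A"

lemma cancel_vec:
  fixes B :: "complex^'n^'m"
  assumes "cadj B *v (B *v u) = 0" shows "B *v u = 0"
proof -
  have "cinner (B *v u) (B *v u) = cinner u (cadj B *v (B *v u))" by (rule cinner_adj)
  then show ?thesis using assms cinner_self_eq_0[of "B *v u"] by simp
qed

lemma cancel_left:
  fixes B :: "complex^'n^'m" and Y Y' :: "complex^'p^'n"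
  assumes "cadj B ** B ** Y = cadj B ** B ** Y'" shows "B ** Y = B ** Y'"
proof -
  have "B *v (Y *v x) = B *v (Y' *v x)" for x
  proof -
    have "(cadj B ** B ** Y) *v x = (cadj B ** B ** Y') *v x" using assms by simp
    then have "cadj B *v (B *v (Y *v x)) = cadj B *v (B *v (Y' *v x))"
      by (simp add: matrix_vector_mul_assoc matrix_mul_assoc)
    then have "cadj B *v (B *v (Y *v x - Y' *v x)) = 0"
      by (simp add: matrix_vector_mult_diff_distrib)
    then have "B *v (Y *v x - Y' *v x) = 0" by (rule cancel_vec)
    then show ?thesis by (simp add: matrix_vector_mult_diff_distrib)
  qed
  then show ?thesis by (simp add: matrix_eq matrix_vector_mul_assoc)
qed

lemma cadj_inj: "cadj A = cadj B \<Longrightarrow> A = B"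
  by (metis cadj_cadj)

lemma cancel_right:
  fixes B :: "complex^'n^'m" and Y Y' :: "complex^'n^'p"
  assumes "Y ** cadj B ** B = Y' ** cadj B ** B" shows "Y ** cadj B = Y' ** cadj B"
proof -
  have "cadj (Y ** cadj B ** B) = cadj (Y' ** cadj B ** B)" using assms by simp
  then have "cadj B ** B ** cadj Y = cadj B ** B ** cadj Y'"
    by (simp add: cadj_mult matrix_mul_assoc)
  then have "B ** cadj Y = B ** cadj Y'" by (rule cancel_left)
  then have "cadj (B ** cadj Y) = cadj (B ** cadj Y')" by simp
  then show ?thesis by (simp add: cadj_mult)
qed

lemma penrose_unique:
  assumes X1: "penrose A X1" and X2: "penrose A X2" shows "X1 = X2"
proof -
  have h: "X = X ** A ** Y" if X: "penrose A X" and Y: "penrose A Y" for X Y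
  proof -
    have "X = X ** A ** X" using X by (simp add: penrose_def)
    also have "\<dots> = X ** cadj (A ** X)" using X by (simp add: penrose_def matrix_mul_assoc)
    also have "\<dots> = X ** cadj X ** cadj A" by (simp add: cadj_mult matrix_mul_assoc)
    also have "\<dots> = X ** cadj X ** cadj (A ** Y ** A)" using Y by (simp add: penrose_def)
    also have "\<dots> = X ** (cadj (A ** X)) ** cadj (A ** Y)" by (simp add: cadj_mult matrix_mul_assoc)
    also have "\<dots> = X ** (A ** X) ** (A ** Y)" using X Y by (simp add: penrose_def)
    also have "\<dots> = (X ** A ** X) ** A ** Y" by (simp add: matrix_mul_assoc)
    also have "\<dots> = X ** A ** Y" using X by (simp add: penrose_def)
    finally show ?thesis .
  qed
  have h2: "Y = X ** A ** Y" if X: "penrose A X" and Y: "penrose A Y" for X Y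
  proof -
    have "Y = Y ** A ** Y" using Y by (simp add: penrose_def)
    also have "\<dots> = cadj (Y ** A) ** Y" using Y by (simp add: penrose_def)
    also have "\<dots> = cadj A ** cadj Y ** Y" by (simp add: cadj_mult)
    also have "\<dots> = cadj (A ** X ** A) ** cadj Y ** Y" using X by (simp add: penrose_def)
    also have "\<dots> = cadj (X ** A) ** cadj (Y ** A) ** Y" by (simp add: cadj_mult matrix_mul_assoc)
    also have "\<dots> = (X ** A) ** (Y ** A) ** Y" using X Y by (simp add: penrose_def)
    also have "\<dots> = X ** A ** (Y ** A ** Y)" by (simp add: matrix_mul_assoc)
    also have "\<dots> = X ** A ** Y" using Y by (simp add: penrose_def)
    finally show ?thesis .
  qed
  show ?thesis using h[OF X1 X2] h2[OF X1 X2] by simp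
qed

lemma g_inverse_exists:
  fixes A :: "'a::field^'n^'m"
  shows "\<exists>Z. A ** Z ** A = A"
proof -
  obtain g where g: "Vector_Spaces.linear (*s) (*s) g" "\<forall>y\<in>range ((*v) A). A *v g y = y"
    using vec.linear_exists_right_inverse_on[OF matrix_vector_mul_linear_gen, of UNIV A]
    by auto
  have "(A ** matrix g ** A) *v x = A *v x" for x
    using g by (simp add: matrix_vector_mul_assoc[symmetric] matrix_works)
  then show ?thesis by (auto simp: matrix_eq)
qed

lemma penrose_herm_exists:
  fixes S :: "complex^'n^'n"
  assumes h: "cadj S = S"
  shows "\<exists>X. penrose S X"
proof -
  obtain Z where Z: "S ** S ** S ** Z ** (S ** S ** S) = S ** S ** S"
    using g_inverse_exists by blast
  have Z': "S ** S ** S ** Z ** S ** S ** S = S ** S ** S" using Z by (simp add: matrix_mul_assoc)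
  have a: "S ** S ** Z ** S ** S ** S = S ** S"
  proof -
    have "cadj S ** S ** (S ** Z ** S ** S ** S) = cadj S ** S ** S" using Z' h by (simp add: matrix_mul_assoc)
    from cancel_left[OF this] show ?thesis by (simp add: matrix_mul_assoc)
  qed
  have b: "S ** Z ** S ** S ** S = S"
  proof -
    have "cadj S ** S ** (Z ** S ** S ** S) = cadj S ** S ** mat 1" using a h by (simp add: matrix_mul_assoc)
    from cancel_left[OF this] show ?thesis by (simp add: matrix_mul_assoc)
  qed
  have c0: "S ** S ** S ** Z ** S ** S = S ** S"
  proof -
    have "(S ** S ** S ** Z ** S) ** cadj S ** S = S ** cadj S ** S" using Z' h by (simp add: matrix_mul_assoc)
    from cancel_right[OF this] show ?thesis using h by (simp add: matrix_mul_assoc)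
  qed
  have c: "S ** S ** S ** Z ** S = S"
  proof -
    have "(S ** S ** S ** Z) ** cadj S ** S = mat 1 ** cadj S ** S" using c0 h by (simp add: matrix_mul_assoc)
    from cancel_right[OF this] show ?thesis using h by (simp add: matrix_mul_assoc)
  qed
  have d: "S ** S ** Z ** S ** S = S"
  proof -
    have "(S ** S ** Z ** S) ** cadj S ** S = mat 1 ** cadj S ** S" using a h by (simp add: matrix_mul_assoc)
    from cancel_right[OF this] show ?thesis using h by (simp add: matrix_mul_assoc)
  qed
  have bg: "L ** S ** Z ** S ** S ** S = L ** S" for L :: "complex^'n^'n"
  proof -
    have "L ** (S ** Z ** S ** S ** S) = L ** S" using b by simp
    then show ?thesis by (simp add: matrix_mul_assoc)
  qed
  have cg: "L ** S ** S ** S ** Z ** S = L ** S" for L :: "complex^'n^'n"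
  proof -
    have "L ** (S ** S ** S ** Z ** S) = L ** S" using c by simp
    then show ?thesis by (simp add: matrix_mul_assoc)
  qed
  have cs: "S ** cadj Z ** S ** S ** S = S"
  proof -
    have "cadj (S ** S ** S ** Z ** S) = cadj S" using c by simp
    then show ?thesis using h by (simp add: cadj_mult matrix_mul_assoc)
  qed
  define X where "X = S ** Z ** S"
  define E where "E = S ** S ** Z ** S"
  have p1: "S ** X ** S = S" unfolding X_def using d by (simp add: matrix_mul_assoc)
  have p2: "X ** S ** X = X" unfolding X_def using b by (simp add: matrix_mul_assoc)
  have SX: "S ** X = E" unfolding X_def E_def by (simp add: matrix_mul_assoc)
  have XS: "X ** S = E"
  proof -
    have "X ** S = S ** Z ** S ** (S ** S ** S ** Z ** S)" unfolding X_def using c by simp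
    also have "\<dots> = E" unfolding E_def using bg[of "mat 1"] by (simp add: matrix_mul_assoc)
    finally show ?thesis .
  qed
  have EH: "cadj E = E"
  proof -
    have "cadj E = S ** cadj Z ** S ** S" unfolding E_def using h by (simp add: cadj_mult matrix_mul_assoc)
    also have "\<dots> = (S ** cadj Z ** S ** S ** S) ** S ** Z ** S"
      using cg[of "S ** cadj Z ** S"] by (simp add: matrix_mul_assoc)
    also have "\<dots> = E" unfolding E_def using cs by simp
    finally show ?thesis .
  qed
  have "penrose S X" unfolding penrose_def using p1 p2 SX XS EH by simp
  then show ?thesis by blast
qed

lemma mp_inverse_herm:
  fixes S :: "complex^'n^'n"
  assumes h: "cadj S = S"
  shows "penrose S (mp_inverse S)" "cadj (mp_inverse S) = mp_inverse S"
proof -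
  obtain X where X: "penrose S X" using penrose_herm_exists[OF h] by blast
  have eq0: "mp_inverse S = (THE Y. penrose S Y)" unfolding mp_inverse_def penrose_def ..
  have eq1: "(THE Y. penrose S Y) = X"
    by (rule the_equality) (use X penrose_unique[OF _ X] in blast)+
  have eq: "mp_inverse S = X" using eq0 eq1 by simp
  show "penrose S (mp_inverse S)" using X eq by simp
  have "penrose S (cadj X)"
  proof -
    have X1: "S ** X ** S = S" "X ** S ** X = X" "cadj (S ** X) = S ** X" "cadj (X ** S) = X ** S"
      using X by (auto simp: penrose_def)
    have "S ** cadj X ** S = cadj (S ** X ** S)" using h by (simp add: cadj_mult matrix_mul_assoc)
    then have 1: "S ** cadj X ** S = S" using X1 h by simp
    have "cadj X ** S ** cadj X = cadj (X ** S ** X)" using h by (simp add: cadj_mult matrix_mul_assoc)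
    then have 2: "cadj X ** S ** cadj X = cadj X" using X1 by simp
    have e3: "S ** cadj X = cadj (X ** S)" using h by (simp add: cadj_mult)
    have 3: "cadj (S ** cadj X) = S ** cadj X" unfolding e3 using X1 by simp
    have e4: "cadj X ** S = cadj (S ** X)" using h by (simp add: cadj_mult)
    have 4: "cadj (cadj X ** S) = cadj X ** S" unfolding e4 using X1 by simp
    show ?thesis unfolding penrose_def using 1 2 3 4 by blast
  qed
  then have "cadj X = X" using penrose_unique X by blast
  then show "cadj (mp_inverse S) = mp_inverse S" using eq by simp
qed


lemma tangent_aux:
  fixes t m :: real assumes t: "t \<ge> 0" and m: "m \<ge> 0"
  shows "(t - m) * ((\<Sum>p<Suc n. t ^ p * m ^ (n - p)) - real (Suc n) * m ^ n) \<ge> 0"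
    and "n \<ge> 1 \<Longrightarrow> t \<noteq> m \<Longrightarrow> (t - m) * ((\<Sum>p<Suc n. t ^ p * m ^ (n - p)) - real (Suc n) * m ^ n) > 0"
proof -
  have ge: "(\<Sum>p<Suc n. t ^ p * m ^ (n - p)) \<ge> real (Suc n) * m ^ n" if "t \<ge> m"
  proof -
    have "(\<Sum>p<Suc n. m ^ n) \<le> (\<Sum>p<Suc n. t ^ p * m ^ (n - p))"
    proof (rule sum_mono)
      fix p assume "p \<in> {..<Suc n}"
      then have "m ^ n = m ^ p * m ^ (n - p)" by (simp add: power_add[symmetric])
      also have "\<dots> \<le> t ^ p * m ^ (n - p)" using that m by (intro mult_right_mono power_mono) auto
      finally show "m ^ n \<le> t ^ p * m ^ (n - p)" .
    qed
    then show ?thesis by simp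
  qed
  have le: "(\<Sum>p<Suc n. t ^ p * m ^ (n - p)) \<le> real (Suc n) * m ^ n" if "t \<le> m"
  proof -
    have "(\<Sum>p<Suc n. t ^ p * m ^ (n - p)) \<le> (\<Sum>p<Suc n. m ^ n)"
    proof (rule sum_mono)
      fix p assume "p \<in> {..<Suc n}"
      then have "m ^ n = m ^ p * m ^ (n - p)" by (simp add: power_add[symmetric])
      moreover have "t ^ p * m ^ (n - p) \<le> m ^ p * m ^ (n - p)" using that m t by (intro mult_right_mono power_mono) auto
      ultimately show "t ^ p * m ^ (n - p) \<le> m ^ n" by simp
    qed
    then show ?thesis by simp
  qed
  show "(t - m) * ((\<Sum>p<Suc n. t ^ p * m ^ (n - p)) - real (Suc n) * m ^ n) \<ge> 0"
  proof (cases "t \<ge> m")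
    case True then show ?thesis using ge by simp
  next
    case False then show ?thesis using le[of] by (intro mult_nonpos_nonpos) auto
  qed
  assume n: "n \<ge> 1" and tm: "t \<noteq> m"
  show "(t - m) * ((\<Sum>p<Suc n. t ^ p * m ^ (n - p)) - real (Suc n) * m ^ n) > 0"
  proof (cases "t > m")
    case True
    have "(\<Sum>p<Suc n. m ^ n) < (\<Sum>p<Suc n. t ^ p * m ^ (n - p))"
    proof (rule sum_strict_mono_ex1)
      show "\<forall>p\<in>{..<Suc n}. m ^ n \<le> t ^ p * m ^ (n - p)"
      proof
        fix p assume "p \<in> {..<Suc n}"
        then have "m ^ n = m ^ p * m ^ (n - p)" by (simp add: power_add[symmetric])
        also have "\<dots> \<le> t ^ p * m ^ (n - p)" using True m by (intro mult_right_mono power_mono) auto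
        finally show "m ^ n \<le> t ^ p * m ^ (n - p)" .
      qed
      show "\<exists>p\<in>{..<Suc n}. m ^ n < t ^ p * m ^ (n - p)"
        using True m n by (intro bexI[of _ n]) (auto intro: power_strict_mono)
    qed simp
    then show ?thesis using True by (intro mult_pos_pos) auto
  next
    case False
    then have tl: "t < m" using tm by simp
    have "(\<Sum>p<Suc n. t ^ p * m ^ (n - p)) < (\<Sum>p<Suc n. m ^ n)"
    proof (rule sum_strict_mono_ex1)
      show "\<forall>p\<in>{..<Suc n}. t ^ p * m ^ (n - p) \<le> m ^ n"
      proof
        fix p assume "p \<in> {..<Suc n}"
        then have "m ^ n = m ^ p * m ^ (n - p)" by (simp add: power_add[symmetric])
        moreover have "t ^ p * m ^ (n - p) \<le> m ^ p * m ^ (n - p)" using tl m t by (intro mult_right_mono power_mono) auto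
        ultimately show "t ^ p * m ^ (n - p) \<le> m ^ n" by simp
      qed
      show "\<exists>p\<in>{..<Suc n}. t ^ p * m ^ (n - p) < m ^ n"
        using tl t n by (intro bexI[of _ n]) (auto intro: power_strict_mono)
    qed simp
    then show ?thesis using tl by (intro mult_neg_neg) auto
  qed
qed

lemma tangent:
  fixes t m :: real assumes "t \<ge> 0" "m \<ge> 0"
  shows "m ^ Suc n + real (Suc n) * m ^ n * (t - m) \<le> t ^ Suc n"
    and "n \<ge> 1 \<Longrightarrow> t \<noteq> m \<Longrightarrow> m ^ Suc n + real (Suc n) * m ^ n * (t - m) < t ^ Suc n"
proof -
  have e: "t ^ Suc n - m ^ Suc n - real (Suc n) * m ^ n * (t - m)
     = (t - m) * ((\<Sum>p<Suc n. t ^ p * m ^ (n - p)) - real (Suc n) * m ^ n)"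
    by (simp only: diff_power_eq_sum) (simp add: algebra_simps)
  show "m ^ Suc n + real (Suc n) * m ^ n * (t - m) \<le> t ^ Suc n"
    using tangent_aux(1)[OF assms, of n] e by linarith
  show "n \<ge> 1 \<Longrightarrow> t \<noteq> m \<Longrightarrow> m ^ Suc n + real (Suc n) * m ^ n * (t - m) < t ^ Suc n"
    using tangent_aux(2)[OF assms, of n] e by linarith
qed

lemma power_mean:
  fixes x :: "'a \<Rightarrow> real"
  assumes I: "finite I" "I \<noteq> {}" and x: "\<And>i. i \<in> I \<Longrightarrow> x i \<ge> 0"
  shows "(\<Sum>i\<in>I. x i) ^ Suc n \<le> real (card I) ^ n * (\<Sum>i\<in>I. x i ^ Suc n)"
    and "n \<ge> 1 \<Longrightarrow> (\<Sum>i\<in>I. x i) ^ Suc n = real (card I) ^ n * (\<Sum>i\<in>I. x i ^ Suc n)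
          \<Longrightarrow> i \<in> I \<Longrightarrow> x i = (\<Sum>i\<in>I. x i) / real (card I)"
proof -
  define c where "c = real (card I)"
  have c: "c > 0" using I by (simp add: c_def card_gt_0_iff)
  define m where "m = (\<Sum>i\<in>I. x i) / c"
  have m: "m \<ge> 0" using x c by (simp add: m_def sum_nonneg)
  have sx: "(\<Sum>i\<in>I. x i) = c * m" using c by (simp add: m_def)
  have lin: "(\<Sum>i\<in>I. m ^ Suc n + real (Suc n) * m ^ n * (x i - m)) = c * m ^ Suc n"
    by (simp add: sum.distrib sum_subtractf sum_distrib_left[symmetric] sx c_def)
  have key: "(\<Sum>i\<in>I. x i) ^ Suc n = c ^ n * (c * m ^ Suc n)"
    by (simp add: sx power_mult_distrib)
  have "c * m ^ Suc n \<le> (\<Sum>i\<in>I. x i ^ Suc n)"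
    unfolding lin[symmetric] by (rule sum_mono) (use tangent(1) x m in blast)
  then show "(\<Sum>i\<in>I. x i) ^ Suc n \<le> real (card I) ^ n * (\<Sum>i\<in>I. x i ^ Suc n)"
    unfolding key c_def[symmetric] using c by (intro mult_left_mono) auto
  assume n: "n \<ge> 1" and eq: "(\<Sum>i\<in>I. x i) ^ Suc n = real (card I) ^ n * (\<Sum>i\<in>I. x i ^ Suc n)"
    and i: "i \<in> I"
  have eq2: "c * m ^ Suc n = (\<Sum>i\<in>I. x i ^ Suc n)"
    using eq unfolding key c_def[symmetric] using c by simp
  show "x i = (\<Sum>i\<in>I. x i) / real (card I)"
  proof (rule ccontr)
    assume "x i \<noteq> (\<Sum>i\<in>I. x i) / real (card I)"
    then have "x i \<noteq> m" by (simp add: m_def c_def)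
    have "c * m ^ Suc n < (\<Sum>i\<in>I. x i ^ Suc n)"
      unfolding lin[symmetric]
    proof (rule sum_strict_mono_ex1[OF I(1)])
      show "\<forall>j\<in>I. m ^ Suc n + real (Suc n) * m ^ n * (x j - m) \<le> x j ^ Suc n"
        using tangent(1) x m by blast
      show "\<exists>j\<in>I. m ^ Suc n + real (Suc n) * m ^ n * (x j - m) < x j ^ Suc n"
        using tangent(2)[OF x[OF i] m n \<open>x i \<noteq> m\<close>] i by blast
    qed
    then show False using eq2 by simp
  qed
qed


context odf begin

abbreviation "S \<equiv> frame_op N w"
abbreviation "X \<equiv> mp_inverse (frame_op N w)"

lemma S_herm: "cadj S = S"
  unfolding frame_op_def by (simp add: cadj_sum cadj_outer)

lemma S_mv: "S *v y = (\<Sum>j<N. cinner y (w j) *s w j)"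
  unfolding frame_op_def by (simp add: sum_mv outer_mv)

lemma X_pen: "penrose S X" and X_herm: "cadj X = X"
  using mp_inverse_herm[OF S_herm] by auto

lemma S_ker: assumes "S *v u = 0" "j < N" shows "cinner u (w j) = 0"
proof -
  have "cinner (S *v u) u = (\<Sum>j<N. of_real ((cmod (cinner u (w j)))\<^sup>2))"
    unfolding S_mv by (simp add: cinner_sum_left cinner_scale_left complex_norm_square
        cinner_commute[of "w _" u] del: of_real_power)
  then have "(\<Sum>j<N. (cmod (cinner u (w j)))\<^sup>2) = 0"
    using assms(1) by (simp del: of_real_power flip: of_real_sum)
  then have "\<forall>j\<in>{..<N}. (cmod (cinner u (w j)))\<^sup>2 = 0"
    by (subst sum_nonneg_eq_0_iff[symmetric]) auto
  then show ?thesis using assms(2) by simp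
qed

lemma SXw: assumes i: "i < N" shows "S *v (X *v w i) = w i"
proof -
  have p: "S ** X ** S = S" "cadj (S ** X) = S ** X" using X_pen by (auto simp: penrose_def)
  have SSX: "S ** (S ** X) = S"
  proof -
    have "S = cadj (S ** X ** S)" using p S_herm by simp
    also have "\<dots> = cadj S ** cadj (S ** X)" by (simp only: cadj_mult)
    also have "\<dots> = S ** (S ** X)" using p S_herm by simp
    finally show ?thesis by simp
  qed
  define u where "u = w i - S *v (X *v w i)"
  have "S *v u = S *v w i - (S ** (S ** X)) *v w i"
    by (simp add: u_def matrix_vector_mult_diff_distrib matrix_vector_mul_assoc)
  then have Su: "S *v u = 0" using SSX by simp
  have u1: "cinner u (w i) = 0" using S_ker[OF Su i] .
  have "(S ** X) *v u = (S ** X) *v w i - (S ** X ** S ** X) *v w i"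
    by (simp add: u_def matrix_vector_mult_diff_distrib matrix_vector_mul_assoc matrix_mul_assoc)
  then have SXu: "(S ** X) *v u = 0" using p by simp
  have "cinner u (S *v (X *v w i)) = cinner u ((S ** X) *v w i)" by (simp add: matrix_vector_mul_assoc)
  also have "\<dots> = cnj (cinner ((S ** X) *v w i) u)" by (rule cinner_commute)
  also have "\<dots> = cnj (cinner (w i) (cadj (S ** X) *v u))" by (simp add: cinner_adj)
  also have "\<dots> = 0" using p SXu by simp
  finally have u2: "cinner u (S *v (X *v w i)) = 0" .
  have "cinner u u = 0" unfolding u_def[of] using u1 u2
    by (simp add: u_def cinner_diff_right)
  then show ?thesis using cinner_self_eq_0[of u] by (simp add: u_def)
qed

lemma inner_X: "cinner (w i) (X *v w j) = cinner (X *v w i) (w j)"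
  using cinner_adj[of X "w i" "w j"] X_herm by simp

lemma recon_t: assumes "i < N" shows "(\<Sum>j<N. cinner (w i) (X *v w j) *s w j) = w i"
  using SXw[OF assms] by (simp add: inner_X S_mv)

definition "vt j = oblique_proj V (corth W) (X *v w j)"
definition "M i j = cinner (w i) (v j)"
definition "Mt i j = cinner (w i) (X *v w j)"

lemma Mt_vt: "i < N \<Longrightarrow> cinner (w i) (vt j) = Mt i j"
  unfolding vt_def Mt_def proj2_eq using inner_proj2 wW by blast

lemma Mt_herm: "cnj (Mt j i) = Mt i j"
  unfolding Mt_def by (simp add: inner_X cinner_commute[of "X *v w i"])

lemma MtM: assumes "i < N" shows "(\<Sum>j<N. Mt i j * M j l) = M i l"
proof -
  have "M i l = cinner (\<Sum>j<N. cinner (w i) (X *v w j) *s w j) (v l)"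
    using recon_t[OF assms] by (simp add: M_def)
  then show ?thesis by (simp add: cinner_sum_left cinner_scale_left Mt_def M_def)
qed

lemma MMt: assumes "i < N" shows "(\<Sum>j<N. M i j * Mt j l) = Mt i l"
proof -
  have "Mt i l = cinner (\<Sum>j<N. cinner (w i) (v j) *s w j) (X *v w l)"
    using recon_w[OF assms] by (simp add: Mt_def)
  then show ?thesis by (simp add: cinner_sum_left cinner_scale_left Mt_def M_def)
qed

lemma MtMt: assumes "i < N" shows "(\<Sum>j<N. Mt i j * Mt j l) = Mt i l"
proof -
  have "Mt i l = cinner (\<Sum>j<N. cinner (w i) (X *v w j) *s w j) (X *v w l)"
    using recon_t[OF assms] by (simp add: Mt_def)
  then show ?thesis by (simp add: cinner_sum_left cinner_scale_left Mt_def)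
qed

lemma trM: "(\<Sum>i<N. M i i) = of_nat (vec.dim W)"
  using trace by (simp add: M_def)

lemma trMMt: "(\<Sum>i<N. \<Sum>j<N. M i j * Mt j i) = of_nat (vec.dim W)"
proof -
  have "(\<Sum>i<N. \<Sum>j<N. M i j * Mt j i) = (\<Sum>j<N. \<Sum>i<N. Mt j i * M i j)"
    by (subst sum.swap) (simp add: mult.commute)
  also have "\<dots> = (\<Sum>j<N. M j j)" using MtM by simp
  finally show ?thesis using trM by simp
qed

lemma trMt: "(\<Sum>i<N. Mt i i) = of_nat (vec.dim W)"
  using trMMt MMt by simp

definition "F = (\<Sum>i<N. \<Sum>j<N. (cmod (M i j))\<^sup>2)"

lemma frob_diff: "(\<Sum>i<N. \<Sum>j<N. (cmod (M i j - Mt i j))\<^sup>2) = F - real (vec.dim W)"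
proof -
  have c: "(z::complex) * cnj z = of_real ((cmod z)\<^sup>2)" for z by (rule complex_norm_square[symmetric])
  have e: "(M i j - Mt i j) * cnj (M i j - Mt i j) =
      M i j * cnj (M i j) - M i j * Mt j i - cnj (M i j * Mt j i) + Mt i j * Mt j i" for i j
    using Mt_herm[of i j] Mt_herm[of j i] by (simp add: algebra_simps)
  have "complex_of_real (\<Sum>i<N. \<Sum>j<N. (cmod (M i j - Mt i j))\<^sup>2)
     = (\<Sum>i<N. \<Sum>j<N. (M i j - Mt i j) * cnj (M i j - Mt i j))"
    by (simp only: of_real_sum c)
  also have "\<dots> = (\<Sum>i<N. \<Sum>j<N. M i j * cnj (M i j)) - (\<Sum>i<N. \<Sum>j<N. M i j * Mt j i)
      - cnj (\<Sum>i<N. \<Sum>j<N. M i j * Mt j i) + (\<Sum>i<N. \<Sum>j<N. Mt i j * Mt j i)"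
    by (simp only: e sum.distrib sum_subtractf cnj_sum)
  also have "\<dots> = of_real F - of_nat (vec.dim W)"
  proof -
    have t1: "(\<Sum>i<N. \<Sum>j<N. M i j * cnj (M i j)) = of_real F"
      unfolding F_def by (simp only: of_real_sum c)
    have "(\<Sum>i<N. \<Sum>j<N. Mt i j * Mt j i) = (\<Sum>i<N. Mt i i)"
      by (rule sum.cong) (simp_all add: MtMt)
    then have t2: "(\<Sum>i<N. \<Sum>j<N. Mt i j * Mt j i) = of_nat (vec.dim W)" using trMt by simp
    show ?thesis unfolding t1 t2 trMMt by simp
  qed
  finally have h: "complex_of_real (\<Sum>i<N. \<Sum>j<N. (cmod (M i j - Mt i j))\<^sup>2)
      = of_real F - of_nat (vec.dim W)" .
  have h2: "of_real F - of_nat (vec.dim W) = complex_of_real (F - real (vec.dim W))" by simp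
  show ?thesis using h unfolding h2 of_real_eq_iff .
qed

lemma F_ge: "F \<ge> real (vec.dim W)"
proof -
  have "0 \<le> (\<Sum>i<N. \<Sum>j<N. (cmod (M i j - Mt i j))\<^sup>2)" by (intro sum_nonneg) auto
  then show ?thesis using frob_diff by simp
qed

lemma F_eq: "F = real (vec.dim W) \<longleftrightarrow> (\<forall>j<N. v j = vt j)"
proof
  assume "F = real (vec.dim W)"
  then have "(\<Sum>i<N. \<Sum>j<N. (cmod (M i j - Mt i j))\<^sup>2) = 0" using frob_diff by simp
  then have "\<forall>i\<in>{..<N}. (\<Sum>j<N. (cmod (M i j - Mt i j))\<^sup>2) = 0"
    by (subst sum_nonneg_eq_0_iff[symmetric]) (auto intro: sum_nonneg)
  then have z: "\<forall>i<N. \<forall>j<N. M i j = Mt i j"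
    by (simp add: sum_nonneg_eq_0_iff)
  show "\<forall>j<N. v j = vt j"
  proof (intro allI impI)
    fix j assume j: "j < N"
    have in_V: "v j - vt j \<in> V"
      using vec.subspace_diff[OF subV vV[OF j]] proj2_V unfolding vt_def proj2_eq by blast
    have "\<And>i. i < N \<Longrightarrow> cinner (w i) (v j - vt j) = 0"
      using z j Mt_vt by (simp add: cinner_diff_right M_def)
    then have "\<And>i. i < N \<Longrightarrow> cinner (w i) (v j - vt j) = 0" .
    have "cinner (v j - vt j) y = 0" if y: "y \<in> W" for y
    proof -
      have "cinner y (v j - vt j) = 0"
        by (rule orthW[OF _ y]) (use \<open>\<And>i. i < N \<Longrightarrow> cinner (w i) (v j - vt j) = 0\<close> in blast)
      then show ?thesis using cinner_commute[of "v j - vt j" y] by simp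
    qed
    then have "v j - vt j = 0" using V_corthW[OF in_V] by blast
    then show "v j = vt j" by simp
  qed
next
  assume "\<forall>j<N. v j = vt j"
  then have "\<forall>i<N. \<forall>j<N. M i j = Mt i j" using Mt_vt by (simp add: M_def)
  then have "(\<Sum>i<N. \<Sum>j<N. (cmod (M i j - Mt i j))\<^sup>2) = 0" by simp
  then show "F = real (vec.dim W)" using frob_diff by simp
qed

end


context odf begin

lemma Npos: "real N > 0" using N1 by simp

lemma powi_conv: "real N powi (int a - int b) = real N ^ a / real N ^ b"
proof -
  have "real N powi (int a - int b) = real N powi int a / real N powi int b"
    using Npos by (simp add: power_int_diff)
  then show ?thesis by simp
qed

lemma part13:
  fixes n :: nat
  defines "a \<equiv> \<lambda>i. cinner (w i) (v i)"
  defines "d \<equiv> real (vec.dim W)"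
  shows "(\<Sum>i<N. cmod (a i) ^ Suc n) \<ge> real N powi (1 - int (Suc n)) * d ^ Suc n"
    and "n \<ge> 1 \<Longrightarrow> ((\<Sum>i<N. cmod (a i) ^ Suc n) = real N powi (1 - int (Suc n)) * d ^ Suc n
          \<longleftrightarrow> (\<forall>i<N. a i = of_nat (vec.dim W) / of_nat N))"
proof -
  have pw: "real N powi (1 - int (Suc n)) * d ^ Suc n = d ^ Suc n / real N ^ n"
    using powi_conv[of 0 n] by simp
  have I: "finite {..<N}" "{..<N} \<noteq> {}" using N1 by (auto simp: lessThan_empty_iff)
  have cardI: "card {..<N} = N" by simp
  have pm1: "(\<Sum>i<N. cmod (a i)) ^ Suc n \<le> real N ^ n * (\<Sum>i<N. cmod (a i) ^ Suc n)"
    using power_mean(1)[OF I, of "\<lambda>i. cmod (a i)" n] by simp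
  have sa: "(\<Sum>i<N. a i) = of_real d" using trace by (simp add: a_def d_def)
  have dle: "d \<le> (\<Sum>i<N. cmod (a i))"
  proof -
    have "d = cmod (\<Sum>i<N. a i)" using sa by (simp add: d_def)
    also have "\<dots> \<le> (\<Sum>i<N. cmod (a i))" by (rule norm_sum)
    finally show ?thesis .
  qed
  have d0: "d \<ge> 0" by (simp add: d_def)
  have dp: "d ^ Suc n \<le> (\<Sum>i<N. cmod (a i)) ^ Suc n" using dle d0 by (intro power_mono) auto
  have main: "d ^ Suc n \<le> real N ^ n * (\<Sum>i<N. cmod (a i) ^ Suc n)" using dp pm1 by linarith
  show "(\<Sum>i<N. cmod (a i) ^ Suc n) \<ge> real N powi (1 - int (Suc n)) * d ^ Suc n"
    unfolding pw using main Npos by (simp add: divide_le_eq mult.commute)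
  assume n: "n \<ge> 1"
  show "(\<Sum>i<N. cmod (a i) ^ Suc n) = real N powi (1 - int (Suc n)) * d ^ Suc n
          \<longleftrightarrow> (\<forall>i<N. a i = of_nat (vec.dim W) / of_nat N)"
  proof
    assume "(\<Sum>i<N. cmod (a i) ^ Suc n) = real N powi (1 - int (Suc n)) * d ^ Suc n"
    then have h0: "(\<Sum>i<N. cmod (a i) ^ Suc n) = d ^ Suc n / real N ^ n"
      unfolding pw .
    have Nn: "real N ^ n > 0" using Npos by simp
    have eq: "real N ^ n * (\<Sum>i<N. cmod (a i) ^ Suc n) = d ^ Suc n"
      unfolding h0 using Nn by simp
    have e1: "(\<Sum>i<N. cmod (a i)) ^ Suc n = real N ^ n * (\<Sum>i<N. cmod (a i) ^ Suc n)"
      using eq dp pm1 by linarith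
    have "(\<Sum>i<N. cmod (a i)) ^ Suc n = d ^ Suc n" using e1 eq by simp
    then have sd: "(\<Sum>i<N. cmod (a i)) = d"
      by (rule power_eq_imp_eq_base) (simp_all add: d0 sum_nonneg)
    have ca: "cmod (a i) = d / real N" if "i < N" for i
    proof -
      have "cmod (a i) = (\<Sum>i<N. cmod (a i)) / real (card {..<N})"
        by (rule power_mean(2)[OF I _ n]) (use e1 that in auto)
      then show ?thesis unfolding sd card_lessThan .
    qed
    have "(\<Sum>i<N. cmod (a i) - Re (a i)) = 0"
      using sd sa by (simp add: sum_subtractf flip: Re_sum)
    then have "\<forall>i\<in>{..<N}. cmod (a i) - Re (a i) = 0"
      by (subst sum_nonneg_eq_0_iff[symmetric]) (auto simp: complex_Re_le_cmod)
    then have re: "Re (a i) = cmod (a i)" if "i < N" for i using that by simp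
    show "\<forall>i<N. a i = of_nat (vec.dim W) / of_nat N"
    proof (intro allI impI)
      fix i assume i: "i < N"
      have "(Im (a i))\<^sup>2 = 0" using cmod_power2[of "a i"] re[OF i] by simp
      then have im: "Im (a i) = 0" by simp
      have "a i = complex_of_real (d / real N)"
        using re[OF i] ca[OF i] im by (simp add: complex_eq_iff)
      then show "a i = of_nat (vec.dim W) / of_nat N" by (simp add: d_def)
    qed
  next
    assume h: "\<forall>i<N. a i = of_nat (vec.dim W) / of_nat N"
    have "cmod (a i) = d / real N" if "i < N" for i
    proof -
      have "a i = complex_of_real (d / real N)" using h that by (simp add: d_def)
      then have "cmod (a i) = \<bar>d / real N\<bar>" by (simp only: norm_of_real)
      then show ?thesis using d0 Npos by simp
    qed
    then have "(\<Sum>i<N. cmod (a i) ^ Suc n) = (\<Sum>i<N. (d / real N) ^ Suc n)" by simp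
    also have "\<dots> = real N * (d / real N) ^ Suc n" by simp
    also have "\<dots> = d ^ Suc n / real N ^ n" using Npos by (simp add: power_divide field_simps)
    finally show "(\<Sum>i<N. cmod (a i) ^ Suc n) = real N powi (1 - int (Suc n)) * d ^ Suc n"
      unfolding pw .
  qed
qed

end


context odf begin

lemma part24:
  fixes m :: nat
  defines "d \<equiv> real (vec.dim W)"
  shows "(\<Sum>i<N. \<Sum>j<N. cmod (M i j) ^ (2 * Suc m)) \<ge> real N powi (2 - int (2 * Suc m)) * d ^ Suc m"
    and "m \<ge> 1 \<Longrightarrow> ((\<Sum>i<N. \<Sum>j<N. cmod (M i j) ^ (2 * Suc m)) = real N powi (2 - int (2 * Suc m)) * d ^ Suc m
          \<longleftrightarrow> ((\<exists>c. \<forall>i<N. \<forall>j<N. cmod (M i j) = c) \<and> (\<forall>j<N. v j = vt j)))"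
proof -
  define I where "I = {..<N} \<times> {..<N}"
  define x where "x = (\<lambda>(i,j). (cmod (M i j))\<^sup>2)"
  have I: "finite I" "I \<noteq> {}" using N1 by (auto simp: I_def lessThan_empty_iff)
  have cardI: "real (card I) = real N * real N" by (simp add: I_def card_cartesian_product)
  have NN: "real N * real N > 0" using Npos by simp
  have pw: "real N powi (2 - int (2 * Suc m)) * d ^ Suc m = d ^ Suc m / (real N * real N) ^ m"
  proof -
    have "real N powi (2 - int (2 * Suc m)) = real N ^ 0 / real N ^ (2 * m)"
      using powi_conv[of 0 "2 * m"] by simp
    then show ?thesis by (simp add: power_mult_distrib power_mult[symmetric] mult_2[symmetric] power_add[symmetric] mult.commute)
  qed
  have sF: "(\<Sum>z\<in>I. x z) = F"
    by (simp add: I_def x_def F_def sum.cartesian_product)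
  have sP: "(\<Sum>z\<in>I. x z ^ Suc m) = (\<Sum>i<N. \<Sum>j<N. cmod (M i j) ^ (2 * Suc m))"
  proof -
    have "(\<Sum>i<N. \<Sum>j<N. cmod (M i j) ^ (2 * Suc m)) = (\<Sum>i<N. \<Sum>j<N. ((cmod (M i j))\<^sup>2) ^ Suc m)"
      by (simp only: power_mult)
    also have "\<dots> = (\<Sum>z\<in>I. x z ^ Suc m)"
      unfolding I_def sum.cartesian_product by (rule sum.cong) (auto simp: x_def split: prod.split)
    finally show ?thesis by simp
  qed
  have x0: "\<And>z. z \<in> I \<Longrightarrow> x z \<ge> 0" by (simp add: x_def split: prod.split)
  have pm1: "F ^ Suc m \<le> (real N * real N) ^ m * (\<Sum>i<N. \<Sum>j<N. cmod (M i j) ^ (2 * Suc m))"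
    using power_mean(1)[of I x m, OF I x0] unfolding sF sP cardI .
  have d0: "d \<ge> 0" by (simp add: d_def)
  have dF: "d \<le> F" using F_ge by (simp add: d_def)
  have dp: "d ^ Suc m \<le> F ^ Suc m" using dF d0 by (intro power_mono) auto
  have main: "d ^ Suc m \<le> (real N * real N) ^ m * (\<Sum>i<N. \<Sum>j<N. cmod (M i j) ^ (2 * Suc m))"
    using dp pm1 by linarith
  have NNm: "(real N * real N) ^ m > 0" using NN by simp
  show "(\<Sum>i<N. \<Sum>j<N. cmod (M i j) ^ (2 * Suc m)) \<ge> real N powi (2 - int (2 * Suc m)) * d ^ Suc m"
    unfolding pw using main NNm by (simp add: divide_le_eq mult.commute)
  assume m: "m \<ge> 1"
  show "(\<Sum>i<N. \<Sum>j<N. cmod (M i j) ^ (2 * Suc m)) = real N powi (2 - int (2 * Suc m)) * d ^ Suc m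
          \<longleftrightarrow> ((\<exists>c. \<forall>i<N. \<forall>j<N. cmod (M i j) = c) \<and> (\<forall>j<N. v j = vt j))"
  proof
    assume "(\<Sum>i<N. \<Sum>j<N. cmod (M i j) ^ (2 * Suc m)) = real N powi (2 - int (2 * Suc m)) * d ^ Suc m"
    then have h0: "(\<Sum>i<N. \<Sum>j<N. cmod (M i j) ^ (2 * Suc m)) = d ^ Suc m / (real N * real N) ^ m"
      unfolding pw .
    have eq: "(real N * real N) ^ m * (\<Sum>i<N. \<Sum>j<N. cmod (M i j) ^ (2 * Suc m)) = d ^ Suc m"
      unfolding h0 using NNm N1 by simp
    have e1: "F ^ Suc m = (real N * real N) ^ m * (\<Sum>i<N. \<Sum>j<N. cmod (M i j) ^ (2 * Suc m))"
      using eq dp pm1 by linarith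
    have "F ^ Suc m = d ^ Suc m" using e1 eq by simp
    then have Fd: "F = d"
      by (rule power_eq_imp_eq_base) (use d0 dF in simp_all)
    have xc: "x z = F / (real N * real N)" if "z \<in> I" for z
    proof -
      have "x z = (\<Sum>z\<in>I. x z) / real (card I)"
        by (rule power_mean(2)[of I x m, OF I x0 m]) (use e1 that in \<open>simp_all only: sF sP cardI\<close>)
      then show ?thesis unfolding sF cardI .
    qed
    have "\<forall>i<N. \<forall>j<N. cmod (M i j) = sqrt (F / (real N * real N))"
    proof (intro allI impI)
      fix i j assume "i < N" "j < N"
      then have "(i, j) \<in> I" by (simp add: I_def)
      from xc[OF this] have "(cmod (M i j))\<^sup>2 = F / (real N * real N)" by (simp add: x_def)
      then show "cmod (M i j) = sqrt (F / (real N * real N))" by (metis norm_ge_zero real_sqrt_unique)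
    qed
    moreover have "\<forall>j<N. v j = vt j" using F_eq Fd by (simp add: d_def)
    ultimately show "(\<exists>c. \<forall>i<N. \<forall>j<N. cmod (M i j) = c) \<and> (\<forall>j<N. v j = vt j)" by blast
  next
    assume "(\<exists>c. \<forall>i<N. \<forall>j<N. cmod (M i j) = c) \<and> (\<forall>j<N. v j = vt j)"
    then obtain c where c: "\<And>i j. i < N \<Longrightarrow> j < N \<Longrightarrow> cmod (M i j) = c" and vv: "\<forall>j<N. v j = vt j"
      by blast
    have Fd: "F = d" using F_eq vv by (simp add: d_def)
    have Fc: "F = real N * real N * c\<^sup>2"
    proof -
      have "F = (\<Sum>i<N. \<Sum>j<N. c\<^sup>2)" unfolding F_def using c by simp
      then show ?thesis by simp
    qed
    have "(\<Sum>i<N. \<Sum>j<N. cmod (M i j) ^ (2 * Suc m)) = (\<Sum>i<N. \<Sum>j<N. (c\<^sup>2) ^ Suc m)"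
      by (intro sum.cong refl) (simp add: c power_mult power2_eq_square)
    also have "\<dots> = (real N * real N) * (c\<^sup>2) ^ Suc m" by simp
    also have "\<dots> = (real N * real N * c\<^sup>2) ^ Suc m / (real N * real N) ^ m"
      using NNm by (simp add: power_mult_distrib field_simps)
    also have "\<dots> = d ^ Suc m / (real N * real N) ^ m" using Fc Fd by simp
    finally show "(\<Sum>i<N. \<Sum>j<N. cmod (M i j) ^ (2 * Suc m)) = real N powi (2 - int (2 * Suc m)) * d ^ Suc m"
      unfolding pw .
  qed
qed

end


theorem corollary3p4:
  fixes W V :: "(complex^'n) set" and w v :: "nat \<Rightarrow> complex^'n"
    and N k p :: nat
  assumes "vec.subspace W" and "vec.subspace V"
    and "direct_sum_UNIV W (corth V)"
    and "N \<ge> 1"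
    and "is_frame N w W"
    and "oblique_dual_frame N w W v V"
    and "p = 2 * k" and "k \<ge> 1"
  shows "(\<Sum>i<N. cmod (cinner (w i) (v i)) ^ p)
            \<ge> real N powi (1 - int p) * real (vec.dim W) ^ p
     \<and> (\<Sum>i<N. \<Sum>j<N. cmod (cinner (w i) (v j)) ^ p)
            \<ge> real N powi (2 - int p) * real (vec.dim W) ^ k
     \<and> (k > 1 \<longrightarrow>
           ((\<Sum>i<N. cmod (cinner (w i) (v i)) ^ p)
              = real N powi (1 - int p) * real (vec.dim W) ^ p
            \<longleftrightarrow> (\<forall>i<N. cinner (w i) (v i) = of_nat (vec.dim W) / of_nat N)))
     \<and> (k > 1 \<longrightarrow>
           ((\<Sum>i<N. \<Sum>j<N. cmod (cinner (w i) (v j)) ^ p)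
              = real N powi (2 - int p) * real (vec.dim W) ^ k
            \<longleftrightarrow> ((\<exists>c. \<forall>i<N. \<forall>j<N. cmod (cinner (w i) (v j)) = c) \<and>
                 (\<forall>j<N. v j = oblique_proj V (corth W) (mp_inverse (frame_op N w) *v w j)))))"
proof -
  interpret odf W V w v N using assms by unfold_locales
  obtain m where km: "k = Suc m" using assms(8) by (cases k) auto
  have p1: "p = Suc (2 * m + 1)" using assms(7) km by simp
  have p2: "p = 2 * Suc m" using assms(7) km by simp
  have c1: "(\<Sum>i<N. cmod (cinner (w i) (v i)) ^ p) \<ge> real N powi (1 - int p) * real (vec.dim W) ^ p"
    unfolding p1 by (rule part13(1))
  have c2: "(\<Sum>i<N. \<Sum>j<N. cmod (cinner (w i) (v j)) ^ p)
            \<ge> real N powi (2 - int p) * real (vec.dim W) ^ k"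
    unfolding p2 km using part24(1)[of m] by (simp only: M_def)
  have c3: "(\<Sum>i<N. cmod (cinner (w i) (v i)) ^ p)
              = real N powi (1 - int p) * real (vec.dim W) ^ p
            \<longleftrightarrow> (\<forall>i<N. cinner (w i) (v i) = of_nat (vec.dim W) / of_nat N)"
    unfolding p1 by (rule part13(2)) simp
  have c4: "(\<Sum>i<N. \<Sum>j<N. cmod (cinner (w i) (v j)) ^ p)
              = real N powi (2 - int p) * real (vec.dim W) ^ k
            \<longleftrightarrow> ((\<exists>c. \<forall>i<N. \<forall>j<N. cmod (cinner (w i) (v j)) = c) \<and>
                 (\<forall>j<N. v j = oblique_proj V (corth W) (mp_inverse (frame_op N w) *v w j)))"
    if "k > 1"
  proof -
    have m: "m \<ge> 1" using that km by simp
    show ?thesis unfolding p2 km using part24(2)[OF m] by (simp only: M_def vt_def)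
  qed
  show ?thesis using c1 c2 c3 c4 by blast
qed

end
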